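(* Let $u,v$ be positive integers with $uv\equiv 4,8\pmod{12}$ and $v$ even. Then $\Phi(u\times v,4,2)\le\left\lfloor\frac{u}{4}\left(\left\lfloor\frac{uv-1}{3}\left\lfloor\frac{uv-2}{2}\right\rfloor\right\rfloor-1\right)\right\rfloor$.
   Context: A 2-D $(u\times v,4,2)$-OOC is a family $\mathcal C$ of $u\times v$ $(0,1)$-matrices of Hamming weight $4$ such that for all $A=(a_{ij}),B=(b_{ij})\in\mathcal C$ and integers $r$ with $A\ne B$ or $r\not\equiv0\pmod v$, $\sum_{i,j}a_{ij}b_{i,j+r}\le 2$ (column indices mod $v$). $\Phi(u\times v,4,2)$ is the largest size of such a code. *)

theory Defs
  imports Main "HOL-Library.Library"
begin

text \<open>A u x v (0,1)-matrix is represented by its support: the set of positions (i,j)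
  with entry 1, where i < u (row) and j < v (column).\<close>

definition matrices :: "nat \<Rightarrow> nat \<Rightarrow> (nat \<times> nat) set set" where
  "matrices u v = Pow ({0..<u} \<times> {0..<v})"

definition corr :: "nat \<Rightarrow> (nat \<times> nat) set \<Rightarrow> (nat \<times> nat) set \<Rightarrow> int \<Rightarrow> nat" where
  "corr v A B r = card {(i,j) \<in> A. (i, nat ((int j + r) mod int v)) \<in> B}"

definition is_OOC_4_2 :: "nat \<Rightarrow> nat \<Rightarrow> (nat \<times> nat) set set \<Rightarrow> bool" where
  "is_OOC_4_2 u v C \<longleftrightarrow>
     C \<subseteq> matrices u v \<and> (\<forall>A\<in>C. card A = 4) \<and>
     (\<forall>A\<in>C. \<forall>B\<in>C. \<forall>r::int. (A \<noteq> B \<or> \<not> (int v dvd r)) \<longrightarrow> corr v A B r \<le> 2)"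

definition Phi_4_2 :: "nat \<Rightarrow> nat \<Rightarrow> nat" where
  "Phi_4_2 u v = Max {card C | C. is_OOC_4_2 u v C}"

end

theory Submission
  imports Defs
begin

lemma modcancel:
  fixes j j' r v :: nat
  assumes "j < v" "j' < v" "(j + r) mod v = (j' + r) mod v"
  shows "j = j'"
proof -
  have e: "(int j + int r) mod int v = (int j' + int r) mod int v"
    using assms(3) by (metis of_nat_add of_nat_mod)
  have "int j mod int v = ((int j + int r) mod int v - int r) mod int v" by (simp add: mod_diff_left_eq)
  also have "\<dots> = ((int j' + int r) mod int v - int r) mod int v" using e by simp
  also have "\<dots> = int j' mod int v" by (simp add: mod_diff_left_eq)
  finally show ?thesis using assms by simp
qed
definition blk :: "nat \<Rightarrow> (nat \<times> nat) set \<times> nat \<Rightarrow> (nat \<times> nat) set" where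
  "blk v p = (\<lambda>(i,j). (i, (j + snd p) mod v)) ` fst p"

lemma mem_blk: "(a,b) \<in> blk v (A,r) \<longleftrightarrow> (\<exists>j. (a,j) \<in> A \<and> (j + r) mod v = b)"
  unfolding blk_def by auto

lemma blk_grid:
  assumes "A \<subseteq> {0..<u} \<times> {0..<v}" "v > 0"
  shows "blk v (A,r) \<subseteq> {0..<u} \<times> {0..<v}"
  using assms unfolding blk_def by auto

lemma card_blk:
  assumes "A \<subseteq> {0..<u} \<times> {0..<v}"
  shows "card (blk v (A,r)) = card A"
  unfolding blk_def fst_conv snd_conv
proof (rule card_image)
  show "inj_on (\<lambda>(i, j). (i, (j + r) mod v)) A"
    proof (rule inj_onI)
    fix x y assume h: "x \<in> A" "y \<in> A" "(\<lambda>(i, j). (i, (j + r) mod v)) x = (\<lambda>(i, j). (i, (j + r) mod v)) y"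
    obtain a b a' b' where xy: "x = (a,b)" "y = (a',b')" by (cases x, cases y) auto
    have "b < v" "b' < v" using h(1,2) assms xy by auto
    then show "x = y" using h(3) modcancel xy by auto
  qed
qed


lemma blk_shift:
  assumes "(a,b) \<in> blk v (A,r)"
  shows "(a, (b + h) mod v) \<in> blk v (A, (r + h) mod v)"
proof -
  have "\<exists>j. (a,j) \<in> A \<and> (j + r) mod v = b" using assms by (simp only: mem_blk)
  then obtain j where j: "(a,j) \<in> A" "(j + r) mod v = b" by blast
  have "(b + h) mod v = ((j + r) mod v + h) mod v" using j(2) by simp
  also have "\<dots> = (j + (r + h)) mod v" by (simp add: mod_add_left_eq add.assoc)
  also have "\<dots> = (j + (r + h) mod v) mod v" by (simp add: mod_add_right_eq)
  finally have c: "(j + (r + h) mod v) mod v = (b + h) mod v" by simp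
  show ?thesis unfolding mem_blk
  proof (intro exI conjI)
    show "(a,j) \<in> A" by (rule j(1))
    show "(j + (r + h) mod v) mod v = (b + h) mod v" by (rule c)
  qed
qed

lemma shift_twice:
  fixes b h v :: nat
  assumes "v = 2 * h" "b < v"
  shows "((b + h) mod v + h) mod v = b"
proof -
  have "((b + h) mod v + h) mod v = (b + h + h) mod v"
    by (simp add: mod_simps)
  also have "\<dots> = (b + v) mod v" using assms(1) by (simp add: add.assoc mult_2)
  also have "\<dots> = b" using assms(2) by simp
  finally show ?thesis .
qed


context
  fixes u v :: nat and C :: "(nat \<times> nat) set set"
  assumes ooc: "is_OOC_4_2 u v C" and vpos: "v > 0"
begin

lemma CG: "A \<in> C \<Longrightarrow> A \<subseteq> {0..<u} \<times> {0..<v} \<and> card A = 4 \<and> finite A"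
  using ooc unfolding is_OOC_4_2_def matrices_def
  by (metis PowD card.infinite subsetD zero_neq_numeral)

lemma finC: "finite C"
proof -
  have "C \<subseteq> Pow ({0..<u} \<times> {0..<v})" using ooc unfolding is_OOC_4_2_def matrices_def by blast
  then show ?thesis by (rule finite_subset) simp
qed

lemma finP: "finite (C \<times> {0..<v})" using finC by simp

lemma blkP: "p \<in> C \<times> {0..<v} \<Longrightarrow> blk v p \<subseteq> {0..<u} \<times> {0..<v} \<and> card (blk v p) = 4 \<and> finite (blk v p)"
proof -
  assume "p \<in> C \<times> {0..<v}"
  then obtain A r where p: "p = (A,r)" "A \<in> C" by auto
  have "blk v (A,r) \<subseteq> {0..<u} \<times> {0..<v}" using blk_grid CG p(2) vpos by blast
  moreover have "card (blk v (A,r)) = 4" using card_blk CG p(2) by metis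
  moreover have "finite (blk v (A,r))" using calculation(1) finite_subset by blast
  ultimately show ?thesis using p by simp
qed

lemma Kbound:
  assumes "p \<in> C \<times> {0..<v}" "q \<in> C \<times> {0..<v}" "p \<noteq> q"
  shows "card (blk v p \<inter> blk v q) \<le> 2"
proof -
  obtain A r where p: "p = (A,r)" "A \<in> C" "r < v" using assms(1) by auto
  obtain B s where q: "q = (B,s)" "B \<in> C" "s < v" using assms(2) by auto
  define S where "S = {(i,j) \<in> A. (i, nat ((int j + (int r - int s)) mod int v)) \<in> B}"
  have cS: "card S = corr v A B (int r - int s)" unfolding S_def corr_def by simp
  have nd: "A \<noteq> B \<or> \<not> (int v dvd (int r - int s))"
  proof (rule ccontr)
    assume "\<not> ?thesis"
    then have AB: "A = B" and d: "int v dvd (int r - int s)" by auto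
    then have "r \<noteq> s" using assms(3) p q by auto
    then have "int r - int s \<noteq> 0" by simp
    then have "\<bar>int v\<bar> \<le> \<bar>int r - int s\<bar>" using d dvd_imp_le_int by blast
    then show False using p(3) q(3) by linarith
  qed
  have "corr v A B (int r - int s) \<le> 2" using ooc p(2) q(2) nd unfolding is_OOC_4_2_def by blast
  then have S2: "card S \<le> 2" using cS by simp
  have finS: "finite S" unfolding S_def using CG[OF p(2)] by (simp add: case_prod_unfold)
  have sub: "blk v p \<inter> blk v q \<subseteq> (\<lambda>(i,j). (i, (j + r) mod v)) ` S"
  proof
    fix z assume z: "z \<in> blk v p \<inter> blk v q"
    obtain a b where zab: "z = (a,b)" by (cases z)
    have "\<exists>j. (a,j) \<in> A \<and> (j + r) mod v = b" using z zab p(1) by (simp only: mem_blk Int_iff)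
    then obtain j where j: "(a,j) \<in> A" "(j + r) mod v = b" by blast
    have "\<exists>k. (a,k) \<in> B \<and> (k + s) mod v = b" using z zab q(1) by (simp only: mem_blk Int_iff)
    then obtain k where k: "(a,k) \<in> B" "(k + s) mod v = b" by blast
    have kv: "k < v" using k(1) CG[OF q(2)] by auto
    have e: "(int k + int s) mod int v = (int j + int r) mod int v"
      using j(2) k(2) by (metis of_nat_add of_nat_mod)
    have "(int j + (int r - int s)) mod int v = ((int j + int r) mod int v - int s) mod int v"
      by (simp add: mod_diff_left_eq algebra_simps)
    also have "\<dots> = ((int k + int s) mod int v - int s) mod int v" using e by simp
    also have "\<dots> = int k mod int v" by (simp add: mod_diff_left_eq)
    also have "\<dots> = int k" using kv by simp
    finally have "nat ((int j + (int r - int s)) mod int v) = k" by simp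
    then have "(a,j) \<in> S" unfolding S_def using j(1) k(1) by simp
    then show "z \<in> (\<lambda>(i,j). (i, (j + r) mod v)) ` S" using zab j(2) by force
  qed
  have "card (blk v p \<inter> blk v q) \<le> card ((\<lambda>(i,j). (i, (j + r) mod v)) ` S)"
    by (rule card_mono) (use finS sub in auto)
  also have "\<dots> \<le> card S" using finS card_image_le by blast
  finally show ?thesis using S2 by simp
qed


lemma lam_bound:
  assumes x: "x \<in> {0..<u} \<times> {0..<v}" and y: "y \<in> {0..<u} \<times> {0..<v}" and xy: "x \<noteq> y"
  shows "2 * card {p \<in> C \<times> {0..<v}. x \<in> blk v p \<and> y \<in> blk v p} \<le> u * v - 2"
proof -
  define T where "T = {p \<in> C \<times> {0..<v}. x \<in> blk v p \<and> y \<in> blk v p}"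
  define f where "f p = blk v p - {x,y}" for p
  have finT: "finite T" unfolding T_def using finP by simp
  have cf: "card (f p) = 2" if "p \<in> T" for p
  proof -
    have pP: "p \<in> C \<times> {0..<v}" and "{x,y} \<subseteq> blk v p" using that unfolding T_def by auto
    then have "card (f p) = card (blk v p) - card {x,y}" unfolding f_def
      using blkP[OF pP] by (simp add: card_Diff_subset)
    then show ?thesis using blkP[OF pP] xy by simp
  qed
  have disj: "\<forall>p\<in>T. \<forall>q\<in>T. p \<noteq> q \<longrightarrow> f p \<inter> f q = {}"
  proof (intro ballI impI)
    fix p q assume pT: "p \<in> T" and qT: "q \<in> T" and pq: "p \<noteq> q"
    show "f p \<inter> f q = {}"
    proof (rule ccontr)
      assume "f p \<inter> f q \<noteq> {}"
      then obtain z where z: "z \<in> f p" "z \<in> f q" by blast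
      have pP: "p \<in> C \<times> {0..<v}" and qP: "q \<in> C \<times> {0..<v}" using pT qT unfolding T_def by auto
      have sub3: "{x,y,z} \<subseteq> blk v p \<inter> blk v q" using z pT qT unfolding T_def f_def by auto
      have "card {x,y,z} = 3" using z xy unfolding f_def by auto
      moreover have "card {x,y,z} \<le> card (blk v p \<inter> blk v q)"
        by (rule card_mono) (use blkP[OF pP] sub3 in auto)
      ultimately show False using Kbound[OF pP qP pq] by simp
    qed
  qed
  have "card (\<Union> (f ` T)) = (\<Sum>p\<in>T. card (f p))"
    by (rule card_UN_disjoint[OF finT _ disj]) (simp add: f_def blkP T_def)
  also have "\<dots> = 2 * card T" using cf by simp
  finally have cu: "card (\<Union> (f ` T)) = 2 * card T" .
  have "\<Union> (f ` T) \<subseteq> ({0..<u} \<times> {0..<v}) - {x,y}"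
  proof
    fix z assume "z \<in> \<Union> (f ` T)"
    then obtain p where "p \<in> T" "z \<in> f p" by blast
    then show "z \<in> ({0..<u} \<times> {0..<v}) - {x,y}" unfolding f_def T_def using blkP by auto
  qed
  then have "card (\<Union> (f ` T)) \<le> card (({0..<u} \<times> {0..<v}) - {x,y})"
    by (rule card_mono[rotated]) simp
  also have "\<dots> = u * v - 2" using x y xy by (simp add: card_Diff_subset)
  finally show ?thesis using cu unfolding T_def by simp
qed

lemma lam_even:
  assumes v2: "v = 2 * h" and x: "(a,b) \<in> {0..<u} \<times> {0..<v}"
  shows "even (card {p \<in> C \<times> {0..<v}. (a,b) \<in> blk v p \<and> (a, (b + h) mod v) \<in> blk v p})"
proof -
  define S where "S = {p \<in> C \<times> {0..<v}. (a,b) \<in> blk v p \<and> (a, (b + h) mod v) \<in> blk v p}"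
  define \<sigma> where "\<sigma> p = (fst p, (snd p + h) mod v)" for p :: "(nat \<times> nat) set \<times> nat"
  have finS: "finite S" unfolding S_def using finP by simp
  have clos: "\<sigma> p \<in> S" if "p \<in> S" for p
  proof -
    obtain A r where p: "p = (A,r)" by (cases p)
    have A: "A \<in> C" and r: "r < v" and i1: "(a,b) \<in> blk v (A,r)"
      and i2: "(a, (b + h) mod v) \<in> blk v (A,r)" using that p unfolding S_def by auto
    have "(a, (b + h) mod v) \<in> blk v (A, (r + h) mod v)" using blk_shift[OF i1] .
    moreover have "(a, ((b + h) mod v + h) mod v) \<in> blk v (A, (r + h) mod v)" using blk_shift[OF i2] .
    then have "(a, b) \<in> blk v (A, (r + h) mod v)" using shift_twice[OF v2] x by simp
    ultimately show ?thesis unfolding S_def \<sigma>_def p using A vpos by simp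
  qed
  have inj: "inj_on \<sigma> S"
  proof (rule inj_onI)
    fix p q assume "p \<in> S" "q \<in> S" "\<sigma> p = \<sigma> q"
    moreover obtain A r B s where "p = (A,r)" "q = (B,s)" by (cases p, cases q) auto
    ultimately have "A = B" "(r + h) mod v = (s + h) mod v" "r < v" "s < v"
      unfolding S_def \<sigma>_def by auto
    then show "p = q" using modcancel \<open>p = (A,r)\<close> \<open>q = (B,s)\<close> by blast
  qed
  define S1 where "S1 = {p \<in> S. snd p < h}"
  define S2 where "S2 = {p \<in> S. \<not> snd p < h}"
  have im1: "\<sigma> ` S1 \<subseteq> S2"
  proof
    fix z assume "z \<in> \<sigma> ` S1"
    then obtain p where p: "p \<in> S" "snd p < h" "z = \<sigma> p" unfolding S1_def by auto
    have "(snd p + h) mod v = snd p + h" using p(2) v2 by simp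
    then show "z \<in> S2" unfolding S2_def using clos[OF p(1)] p(3) \<sigma>_def by simp
  qed
  have im2: "\<sigma> ` S2 \<subseteq> S1"
  proof
    fix z assume "z \<in> \<sigma> ` S2"
    then obtain p where p: "p \<in> S" "\<not> snd p < h" "z = \<sigma> p" unfolding S2_def by auto
    have sv: "snd p < v" using p(1) unfolding S_def by auto
    have "(snd p + h) mod v = (snd p + h - v) mod v" using p(2) v2 by (simp add: le_mod_geq)
    also have "\<dots> = snd p + h - v" using sv v2 by simp
    finally have "(snd p + h) mod v < h" using sv v2 by simp
    then show "z \<in> S1" unfolding S1_def using clos[OF p(1)] p(3) \<sigma>_def by simp
  qed
  have "card S1 \<le> card S2"
    by (rule card_inj_on_le[OF inj_on_subset[OF inj] im1]) (auto simp: S1_def S2_def finS)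
  moreover have "card S2 \<le> card S1"
    by (rule card_inj_on_le[OF inj_on_subset[OF inj] im2]) (auto simp: S1_def S2_def finS)
  moreover have "card S = card S1 + card S2"
  proof -
    have "S = S1 \<union> S2" "S1 \<inter> S2 = {}" unfolding S1_def S2_def by auto
    then show ?thesis using finS by (simp add: card_Un_disjoint)
  qed
  ultimately show ?thesis unfolding S_def[symmetric] by simp
qed

lemma deg_eq:
  assumes x: "x \<in> {0..<u} \<times> {0..<v}"
  shows "3 * card {p \<in> C \<times> {0..<v}. x \<in> blk v p} =
    (\<Sum>y\<in>({0..<u} \<times> {0..<v}) - {x}. card {p \<in> C \<times> {0..<v}. x \<in> blk v p \<and> y \<in> blk v p})"
proof -
  define Px where "Px = {p \<in> C \<times> {0..<v}. x \<in> blk v p}"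
  define G' where "G' = ({0..<u} \<times> {0..<v}) - {x}"
  have finPx: "finite Px" unfolding Px_def using finP by simp
  have finG': "finite G'" unfolding G'_def by simp
  have c3: "card {y \<in> G'. y \<in> blk v p} = 3" if "p \<in> Px" for p
  proof -
    have pP: "p \<in> C \<times> {0..<v}" and xp: "x \<in> blk v p" using that unfolding Px_def by auto
    have "{y \<in> G'. y \<in> blk v p} = blk v p - {x}" unfolding G'_def using blkP[OF pP] by auto
    then show ?thesis using blkP[OF pP] xp by simp
  qed
  have "3 * card Px = (\<Sum>p\<in>Px. card {y \<in> G'. y \<in> blk v p})" using c3 by simp
  also have "\<dots> = (\<Sum>p\<in>Px. \<Sum>y\<in>{y \<in> G'. y \<in> blk v p}. (1::nat))" by simp
  also have "\<dots> = (\<Sum>y\<in>G'. \<Sum>p | p \<in> Px \<and> y \<in> blk v p. (1::nat))"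
    by (rule sum.swap_restrict[OF finPx finG'])
  also have "\<dots> = (\<Sum>y\<in>G'. card {p \<in> C \<times> {0..<v}. x \<in> blk v p \<and> y \<in> blk v p})"
    unfolding Px_def by (intro sum.cong refl arg_cong[where f=card]) auto
  finally show ?thesis unfolding Px_def G'_def .
qed

lemma total:
  "(\<Sum>x\<in>{0..<u} \<times> {0..<v}. card {p \<in> C \<times> {0..<v}. x \<in> blk v p}) = 4 * card (C \<times> {0..<v})"
proof -
  define G where "G = {0..<u} \<times> {0..<v}"
  define P where "P = C \<times> {0..<v}"
  have fG: "finite G" unfolding G_def by simp
  have fP: "finite P" unfolding P_def using finP .
  have "(\<Sum>p\<in>P. \<Sum>x\<in>{x \<in> G. x \<in> blk v p}. (1::nat)) = (\<Sum>x\<in>G. \<Sum>p | p \<in> P \<and> x \<in> blk v p. (1::nat))"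
    by (rule sum.swap_restrict[OF fP fG])
  moreover have "(\<Sum>p\<in>P. \<Sum>x\<in>{x \<in> G. x \<in> blk v p}. (1::nat)) = (\<Sum>p\<in>P. 4)"
  proof (rule sum.cong)
    fix p assume "p \<in> P"
    then have pP: "p \<in> C \<times> {0..<v}" unfolding P_def .
    have "{x \<in> G. x \<in> blk v p} = blk v p" unfolding G_def using blkP[OF pP] by auto
    then show "(\<Sum>x\<in>{x \<in> G. x \<in> blk v p}. (1::nat)) = 4" using blkP[OF pP] by simp
  qed simp
  ultimately show ?thesis unfolding G_def P_def by simp
qed


lemma deg_bound:
  assumes v2: "v = 2 * h" and n4: "4 dvd u * v" "u * v \<ge> 4" and x: "x \<in> {0..<u} \<times> {0..<v}"
  shows "3 * card {p \<in> C \<times> {0..<v}. x \<in> blk v p} + 1 \<le> (u * v - 1) * ((u * v - 2) div 2)"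
proof -
  obtain a b where xab: "x = (a,b)" by (cases x)
  define n where "n = u * v"
  define k where "k = (n - 2) div 2"
  define lam where "lam y = card {p \<in> C \<times> {0..<v}. x \<in> blk v p \<and> y \<in> blk v p}" for y
  define y0 where "y0 = (a, (b + h) mod v)"
  define G where "G = {0..<u} \<times> {0..<v}"
  have bv: "a < u" "b < v" using x xab by auto
  have h0: "h > 0" using vpos v2 by simp
  have y0G: "y0 \<in> G" unfolding y0_def G_def using bv vpos by simp
  have y0x: "y0 \<noteq> x"
  proof
    assume "y0 = x"
    then have "(h + b) mod v = (0 + b) mod v" unfolding y0_def xab using bv by (simp add: add.commute)
    then have "h = 0" using modcancel[of h v 0 b] v2 h0 by simp
    then show False using h0 by simp
  qed
  have nk: "n - 2 = 2 * k" unfolding k_def n_def using n4 by (auto elim!: dvdE)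
  have kodd: "odd k"
  proof -
    obtain m where "n = 4 * m" using n4 unfolding n_def by (auto elim!: dvdE)
    then have "k = 2 * m - 1" using nk n4 unfolding n_def by simp
    moreover have "m > 0" using \<open>n = 4 * m\<close> n4 unfolding n_def by simp
    ultimately show ?thesis by presburger
  qed
  have lamk: "lam y \<le> k" if "y \<in> G - {x}" for y
    using lam_bound[OF x _ ] that nk unfolding lam_def G_def n_def by fastforce
  have ev: "even (lam y0)" using lam_even[OF v2, of a b] x xab unfolding lam_def y0_def by simp
  have "lam y0 \<le> k" using lamk y0G y0x by simp
  moreover have "lam y0 \<noteq> k" using ev kodd by auto
  ultimately have l0: "lam y0 + 1 \<le> k" by simp
  have finG: "finite G" unfolding G_def by simp
  have cG: "card G = n" unfolding G_def n_def by simp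
  have "3 * card {p \<in> C \<times> {0..<v}. x \<in> blk v p} = (\<Sum>y\<in>G - {x}. lam y)"
    using deg_eq[OF x] unfolding lam_def G_def .
  also have "\<dots> = lam y0 + (\<Sum>y\<in>G - {x} - {y0}. lam y)"
    by (rule sum.remove) (use finG y0G y0x in auto)
  also have "(\<Sum>y\<in>G - {x} - {y0}. lam y) \<le> card (G - {x} - {y0}) * k"
    using sum_bounded_above[of "G - {x} - {y0}" lam k] lamk by auto
  also have "card (G - {x} - {y0}) = n - 2" using cG finG x y0G y0x unfolding G_def
    by (simp add: card_Diff_subset)
  finally have "3 * card {p \<in> C \<times> {0..<v}. x \<in> blk v p} + 1 \<le> k + (n - 2) * k" using l0 by linarith
  also have "k + (n - 2) * k = (n - 1) * k"
  proof -
    have "n - 1 = (n - 2) + 1" using n4 unfolding n_def by simp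
    then show ?thesis by (simp add: algebra_simps)
  qed
  finally show ?thesis unfolding k_def n_def .
qed

end


lemma card_bound:
  fixes u v h J :: nat and C
  assumes ooc: "is_OOC_4_2 u v C" and vpos: "v > 0" and v2: "v = 2 * h"
    and n4: "4 dvd u * v" "u * v \<ge> 4"
    and J: "(u * v - 1) * ((u * v - 2) div 2) = 3 * J"
  shows "4 * card C \<le> u * (J - 1)"
proof -
  define G where "G = {0..<u} \<times> {0..<v}"
  have db: "card {p \<in> C \<times> {0..<v}. x \<in> blk v p} \<le> J - 1" if "x \<in> G" for x
    using deg_bound[OF ooc vpos v2 n4, of x] that J unfolding G_def by linarith
  have "4 * card C * v = 4 * card (C \<times> {0..<v})" by (simp add: card_cartesian_product)
  also have "\<dots> = (\<Sum>x\<in>G. card {p \<in> C \<times> {0..<v}. x \<in> blk v p})"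
    using total[OF ooc vpos] unfolding G_def by simp
  also have "\<dots> \<le> card G * (J - 1)"
    using sum_bounded_above[of G _ "J - 1"] db by auto
  also have "card G = u * v" unfolding G_def by simp
  finally have "(4 * card C) * v \<le> (u * (J - 1)) * v" by (simp add: algebra_simps)
  then show ?thesis using vpos by simp
qed

theorem lemma5p4:
  fixes u v :: nat
  assumes "u > 0" and "v > 0"
    and "(u * v) mod 12 = 4 \<or> (u * v) mod 12 = 8"
    and "even v"
  shows "int (Phi_4_2 u v) \<le>
    \<lfloor>real u / 4 * (real_of_int \<lfloor>(real (u * v) - 1) / 3 * real_of_int \<lfloor>(real (u * v) - 2) / 2\<rfloor>\<rfloor> - 1)\<rfloor>"
proof -
  define n where "n = u * v"
  obtain h where v2: "v = 2 * h" using assms(4) by (auto elim!: evenE)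
  define q where "q = n div 12"
  have "n = 12 * q + n mod 12" unfolding q_def by simp
  then have nq: "n = 12 * q + 4 \<or> n = 12 * q + 8" using assms(3) unfolding n_def by auto
  have n4: "4 dvd n" "n \<ge> 4" using nq by auto
  define k where "k = (n - 2) div 2"
  have nk: "n - 2 = 2 * k" unfolding k_def using n4 by (auto elim!: dvdE)
  have "3 dvd (n - 1) * k"
  proof (cases "n = 12 * q + 4")
    case True
    then have "n - 1 = 3 * (4 * q + 1)" by simp
    then show ?thesis by simp
  next
    case False
    then have "n = 12 * q + 8" using nq by simp
    then have "k = 3 * (2 * q + 1)" using nk by simp
    then show ?thesis by simp
  qed
  then obtain J where J: "(n - 1) * k = 3 * J" by (auto elim!: dvdE)
  have J1: "J \<ge> 1"
  proof -
    have "n - 1 \<ge> 3" "k \<ge> 1" using n4 nk by auto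
    then have "(n - 1) * k \<ge> 3 * 1" by (intro mult_mono) auto
    then show ?thesis using J by simp
  qed
  define M where "M = u * (J - 1) div 4"
  have cb: "card C \<le> M" if "is_OOC_4_2 u v C" for C
  proof -
    have "4 * card C \<le> u * (J - 1)"
      by (rule card_bound[OF that assms(2) v2]) (use n4 J in \<open>auto simp: n_def k_def\<close>)
    then show ?thesis unfolding M_def by simp
  qed
  have fin: "finite {card C | C. is_OOC_4_2 u v C}"
  proof (rule finite_subset)
    show "{card C | C. is_OOC_4_2 u v C} \<subseteq> card ` Pow (matrices u v)"
      unfolding is_OOC_4_2_def by auto
    show "finite (card ` Pow (matrices u v))" unfolding matrices_def by simp
  qed
  have ne: "{card C | C. is_OOC_4_2 u v C} \<noteq> {}"
  proof -
    have "is_OOC_4_2 u v {}" unfolding is_OOC_4_2_def by simp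
    then show ?thesis by blast
  qed
  have PM: "Phi_4_2 u v \<le> M" unfolding Phi_4_2_def
    using fin ne cb by (auto intro!: Max.boundedI)
  have f1: "\<lfloor>(real n - 2) / 2\<rfloor> = int k"
  proof -
    have "real (n - 2) = real n - 2" using n4 by (simp add: of_nat_diff)
    moreover have "real (n - 2) = 2 * real k" using nk by simp
    ultimately have "real n - 2 = 2 * real k" by simp
    then show ?thesis by simp
  qed
  have f2: "\<lfloor>(real n - 1) / 3 * real_of_int (int k)\<rfloor> = int J"
  proof -
    have "real (n - 1) = real n - 1" using n4 by (simp add: of_nat_diff)
    moreover have "real ((n - 1) * k) = real (3 * J)" using J by simp
    ultimately have "(real n - 1) * real k = 3 * real J" by simp
    then have "(real n - 1) / 3 * real k = real J" by simp
    then show ?thesis by simp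
  qed
  have "real (Phi_4_2 u v) \<le> real M" using PM by simp
  also have "real M \<le> real u / 4 * (real J - 1)"
  proof -
    have "4 * M \<le> u * (J - 1)" unfolding M_def by simp
    then have "real (4 * M) \<le> real (u * (J - 1))" by (simp only: of_nat_le_iff)
    then have "4 * real M \<le> real u * real (J - 1)" by simp
    then show ?thesis using J1 by (simp add: of_nat_diff)
  qed
  finally have "real (Phi_4_2 u v) \<le> real u / 4 * (real J - 1)" .
  then have "int (Phi_4_2 u v) \<le> \<lfloor>real u / 4 * (real J - 1)\<rfloor>" by (simp add: le_floor_iff)
  then show ?thesis using f1 f2 unfolding n_def by simp
qed

end
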